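(* Let $0<p<2$. For each $N\ge 2$ let $X_N=\{x_1,\dots,x_N\}\in S(N,2)$ be a minimizer of $\mathrm{FP}_{p,N,2}$ over $S(N,2)$, and regard $X_N$ as the $2\times N$ matrix whose columns are $x_1,\dots,x_N$. Then $$\lim_{N\to\infty}\frac{1}{N}X_NX_N^T=\frac{1}{2}I_2.$$ In particular, $\|X_NX_N^T-\frac{N}{2}I_2\|=o(N)$ as $N\to\infty$.
   Context: $S(N,2)$ denotes the collection of all ordered multisets of $N$ unit-norm vectors in $\mathbb{R}^2$, and for $0<p<\infty$, $\mathrm{FP}_{p,N,2}(X)=\sum_{k=1}^N\sum_{\ell\neq k}|\langle x_k,x_\ell\rangle|^p$. $I_2$ is the $2\times 2$ identity matrix. *)

theory Defs
  imports "HOL-Analysis.Analysis" "HOL-Library.Landau_Symbols"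
begin

text \<open>An element of S(N,2): an ordered N-tuple (indexed by 0..N-1) of unit vectors in R^2.
  Values at indices k >= N are irrelevant.\<close>
definition unit_configs :: "nat \<Rightarrow> (nat \<Rightarrow> real^2) set" where
  "unit_configs N = {X. \<forall>k<N. norm (X k) = 1}"

definition frame_potential :: "real \<Rightarrow> nat \<Rightarrow> (nat \<Rightarrow> real^2) \<Rightarrow> real" where
  "frame_potential p N X = (\<Sum>k<N. \<Sum>l\<in>{..<N} - {k}. \<bar>X k \<bullet> X l\<bar> powr p)"

text \<open>The 2x2 matrix X X^T where X is the 2xN matrix with columns x_1..x_N.\<close>
definition frame_operator :: "nat \<Rightarrow> (nat \<Rightarrow> real^2) \<Rightarrow> real^2^2" where
  "frame_operator N X = (\<chi> i j. \<Sum>k<N. X k $ i * X k $ j)"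

end

theory Submission
  imports Defs
begin
lemma cnt_lt:
  fixes m N k :: nat assumes "k < m" "m \<le> N"
  shows "(\<Sum>l\<in>{..<N} - {k}. (if l < m then 1 else 0::real)) = real m - 1"
proof -
  have "(\<Sum>l\<in>{..<N} - {k}. (if l < m then 1 else 0::real)) = (\<Sum>l\<in>{l\<in>{..<N} - {k}. l < m}. 1)"
    using sum.inter_filter[of "{..<N}-{k}" "\<lambda>_. 1::real" "\<lambda>l. l<m"] by simp
  also have "{l\<in>{..<N} - {k}. l < m} = {..<m} - {k}" using assms by auto
  finally show ?thesis using assms by simp
qed

lemma cnt_ge:
  fixes m N k :: nat assumes "m \<le> k" "k < N"
  shows "(\<Sum>l\<in>{..<N} - {k}. (if \<not> l < m then 1 else 0::real)) = real N - real m - 1"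
proof -
  have "(\<Sum>l\<in>{..<N} - {k}. (if \<not> l < m then 1 else 0::real)) = (\<Sum>l\<in>{l\<in>{..<N} - {k}. \<not> l < m}. 1)"
    using sum.inter_filter[of "{..<N}-{k}" "\<lambda>_. 1::real" "\<lambda>l. \<not> l<m"] by simp
  also have "{l\<in>{..<N} - {k}. \<not> l < m} = {m..<N} - {k}" using assms by auto
  finally show ?thesis using assms by (simp add: of_nat_diff)
qed

definition Ybal :: "nat \<Rightarrow> nat \<Rightarrow> real^2" where
  "Ybal N k = (if k < N div 2 then axis 1 1 else axis 2 1)"

lemma Ybal_unit: "Ybal N \<in> unit_configs N"
  by (simp add: unit_configs_def Ybal_def)

lemma Ybal_FP:
  assumes "0 < p"
  shows "frame_potential p N (Ybal N) \<le> (real N ^ 2 + 1) / 2 - real N"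
proof -
  define m where "m = N div 2"
  have mN: "m \<le> N" by (simp add: m_def)
  have inner: "\<bar>Ybal N k \<bullet> Ybal N l\<bar> powr p = (if (k < m) = (l < m) then 1 else 0)" for k l
    using assms by (auto simp: Ybal_def m_def inner_axis_axis)
  have "frame_potential p N (Ybal N) = (\<Sum>k<N. (if k < m then real m - 1 else real N - real m - 1))"
    unfolding frame_potential_def inner
  proof (rule sum.cong[OF refl])
    fix k assume "k \<in> {..<N}"
    then show "(\<Sum>l\<in>{..<N} - {k}. if (k < m) = (l < m) then 1 else 0) =
      (if k < m then real m - 1 else real N - real m - 1)"
      using cnt_lt[of k m N] cnt_ge[of m k N] mN
      by (cases "k < m") (auto intro!: sum.cong)
  qed
  also have "\<dots> = (\<Sum>k<m. real m - 1) + (\<Sum>k\<in>{m..<N}. real N - real m - 1)"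
  proof -
    have "{..<N} = {..<m} \<union> {m..<N}" using mN by auto
    then have "(\<Sum>k<N. (if k < m then real m - 1 else real N - real m - 1)) =
       (\<Sum>k<m. (if k < m then real m - 1 else real N - real m - 1)) + (\<Sum>k\<in>{m..<N}. (if k < m then real m - 1 else real N - real m - 1))"
      by (simp add: sum.union_disjoint ivl_disj_int)
    then show ?thesis by simp
  qed
  also have "\<dots> = real m * (real m - 1) + (real N - real m) * (real N - real m - 1)"
    using mN by (simp add: of_nat_diff)
  also have "\<dots> \<le> (real N ^ 2 + 1) / 2 - real N"
  proof -
    have "N = 2 * m \<or> N = 2 * m + 1" unfolding m_def by presburger
    then show ?thesis by (auto simp: algebra_simps power2_eq_square)
  qed
  finally show ?thesis .
qed

lemma sq_le_powr:
  fixes t p :: real assumes "\<bar>t\<bar> \<le> 1" "0 < p" "p \<le> 2"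
  shows "t^2 \<le> \<bar>t\<bar> powr p"
proof (cases "t = 0")
  case True then show ?thesis by simp
next
  case False
  have "t^2 = \<bar>t\<bar> powr 2" using False by (simp add: powr_numeral)
  also have "\<dots> \<le> \<bar>t\<bar> powr p" using assms by (intro powr_mono') auto
  finally show ?thesis .
qed

lemma norm22: "(norm (M::real^2^2))^2 = (M$1$1)^2 + (M$1$2)^2 + (M$2$1)^2 + (M$2$2)^2"
  by (simp add: norm_vec_def L2_set_def sum_2)

lemma inner2: "(x::real^2) \<bullet> y = x$1 * y$1 + x$2 * y$2"
  by (simp add: inner_vec_def sum_2)

lemma key:
  assumes X: "X \<in> unit_configs N" and p: "0 < p" "p \<le> 2"
  shows "(norm (frame_operator N X - (real N / 2) *\<^sub>R mat 1))^2 \<le> real N + frame_potential p N X - real N ^ 2 / 2"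
proof -
  define a where "a k = X k $ 1" for k
  define b where "b k = X k $ 2" for k
  define A where "A = (\<Sum>k<N. a k * a k)"
  define B where "B = (\<Sum>k<N. b k * b k)"
  define C where "C = (\<Sum>k<N. a k * b k)"
  have unit: "a k * a k + b k * b k = 1" if "k < N" for k
  proof -
    have "norm (X k) = 1" using X that by (simp add: unit_configs_def)
    then have "X k \<bullet> X k = 1" by (simp add: norm_eq_1)
    then show ?thesis by (simp add: inner2 a_def b_def)
  qed
  have AB: "A + B = real N" unfolding A_def B_def by (simp add: sum.distrib[symmetric] unit)
  have S: "frame_operator N X $ 1 $ 1 = A" "frame_operator N X $ 2 $ 2 = B"
    "frame_operator N X $ 1 $ 2 = C" "frame_operator N X $ 2 $ 1 = C"
    by (simp_all add: frame_operator_def A_def B_def C_def a_def b_def mult.commute)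
  have lhs: "(norm (frame_operator N X - (real N / 2) *\<^sub>R mat 1))^2 = (A - real N/2)^2 + 2 * C^2 + (B - real N/2)^2"
    by (simp add: norm22 S mat_def)
  have dbl: "(\<Sum>k<N. \<Sum>l<N. (X k \<bullet> X l)^2) = A^2 + 2 * C^2 + B^2"
  proof -
    have e: "(X k \<bullet> X l)^2 = (a k * a k) * (a l * a l) + 2 * ((a k * b k) * (a l * b l)) + (b k * b k) * (b l * b l)" for k l
      by (simp add: inner2 a_def b_def power2_eq_square algebra_simps)
    have sA: "A^2 = (\<Sum>k<N. \<Sum>l<N. (a k * a k) * (a l * a l))"
      unfolding A_def power2_eq_square by (rule sum_product)
    have sB: "B^2 = (\<Sum>k<N. \<Sum>l<N. (b k * b k) * (b l * b l))"
      unfolding B_def power2_eq_square by (rule sum_product)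
    have sC: "C^2 = (\<Sum>k<N. \<Sum>l<N. (a k * b k) * (a l * b l))"
      unfolding C_def power2_eq_square by (rule sum_product)
    show ?thesis unfolding e sA sB sC
      by (simp only: sum.distrib sum_distrib_left)
  qed
  have split: "(\<Sum>l<N. (X k \<bullet> X l)^2) = (X k \<bullet> X k)^2 + (\<Sum>l\<in>{..<N}-{k}. (X k \<bullet> X l)^2)" if "k < N" for k
    using that by (simp add: sum.remove)
  have diag: "(X k \<bullet> X k)^2 = 1" if "k < N" for k
    using X that by (simp add: unit_configs_def norm_eq_1)
  have off: "(\<Sum>l\<in>{..<N}-{k}. (X k \<bullet> X l)^2) \<le> (\<Sum>l\<in>{..<N}-{k}. \<bar>X k \<bullet> X l\<bar> powr p)" if "k < N" for k
  proof (rule sum_mono)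
    fix l assume "l \<in> {..<N}-{k}"
    then have "norm (X k) = 1" "norm (X l) = 1" using X that by (auto simp: unit_configs_def)
    then have "\<bar>X k \<bullet> X l\<bar> \<le> 1" using Cauchy_Schwarz_ineq2[of "X k" "X l"] by simp
    then show "(X k \<bullet> X l)^2 \<le> \<bar>X k \<bullet> X l\<bar> powr p" using sq_le_powr p by blast
  qed
  have "(\<Sum>k<N. \<Sum>l<N. (X k \<bullet> X l)^2) \<le> (\<Sum>k<N. 1 + (\<Sum>l\<in>{..<N}-{k}. \<bar>X k \<bullet> X l\<bar> powr p))"
    by (rule sum_mono) (simp add: split diag off)
  also have "\<dots> = real N + frame_potential p N X"
    by (simp add: sum.distrib frame_potential_def)
  finally have "A^2 + 2 * C^2 + B^2 \<le> real N + frame_potential p N X" using dbl by simp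
  moreover have "(A - real N/2)^2 + 2 * C^2 + (B - real N/2)^2 = A^2 + 2 * C^2 + B^2 - real N ^ 2 / 2"
  proof -
    have h: "real N * real N = A * real N + B * real N" using AB by (metis distrib_right)
    show ?thesis using h by (simp add: power2_eq_square algebra_simps)
  qed
  ultimately show ?thesis using lhs by linarith
qed


theorem theorem3p2:
  fixes p :: real and X :: "nat \<Rightarrow> nat \<Rightarrow> real^2"
  assumes "0 < p" and "p < 2"
    and "\<And>N. N \<ge> 2 \<Longrightarrow> X N \<in> unit_configs N \<and>
            (\<forall>Y\<in>unit_configs N. frame_potential p N (X N) \<le> frame_potential p N Y)"
  shows "((\<lambda>N. (1 / real N) *\<^sub>R frame_operator N (X N)) \<longlonglongrightarrow> (1/2) *\<^sub>R mat 1)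
         \<and> (\<lambda>N. norm (frame_operator N (X N) - (real N / 2) *\<^sub>R mat 1)) \<in> o(\<lambda>N. real N)"
proof -
  define D where "D N = frame_operator N (X N) - (real N / 2) *\<^sub>R mat 1" for N
  have bnd: "norm (D N) \<le> 1" if "N \<ge> 2" for N
  proof -
    have XN: "X N \<in> unit_configs N" and mn: "frame_potential p N (X N) \<le> frame_potential p N (Ybal N)"
      using assms(3)[OF that] Ybal_unit by auto
    have "(norm (D N))^2 \<le> real N + frame_potential p N (X N) - real N ^ 2 / 2"
      unfolding D_def using key[OF XN assms(1)] assms(2) by simp
    also have "\<dots> \<le> 1 ^ 2" using mn Ybal_FP[OF assms(1), of N] by (simp add: field_simps)
    finally show ?thesis by (rule power2_le_imp_le) simp
  qed
  have ev: "eventually (\<lambda>N. norm (D N) \<le> 1) sequentially"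
    using bnd by (auto simp: eventually_sequentially)
  have lim1: "((\<lambda>N. 1 / real N) \<longlongrightarrow> 0) sequentially" by (rule lim_1_over_n)
  have part1: "((\<lambda>N. (1 / real N) *\<^sub>R frame_operator N (X N)) \<longlonglongrightarrow> (1/2) *\<^sub>R mat 1)"
  proof (rule LIM_zero_cancel, rule Lim_null_comparison[OF _ lim1])
    show "\<forall>\<^sub>F N in sequentially. norm ((1 / real N) *\<^sub>R frame_operator N (X N) - (1 / 2) *\<^sub>R mat 1) \<le> 1 / real N"
      using ev eventually_gt_at_top[of "0::nat"]
    proof eventually_elim
      case (elim N)
      have "(1 / real N) *\<^sub>R frame_operator N (X N) - (1 / 2) *\<^sub>R mat 1 = (1 / real N) *\<^sub>R D N"
        using elim by (simp add: D_def algebra_simps)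
      then show ?case using elim by (simp add: divide_right_mono)
    qed
  qed
  have part2: "(\<lambda>N. norm (D N)) \<in> o(\<lambda>N. real N)"
  proof (rule smalloI_tendsto)
    show "((\<lambda>N. norm (D N) / real N) \<longlongrightarrow> 0) at_top"
    proof (rule Lim_null_comparison[OF _ lim1])
      show "\<forall>\<^sub>F N in at_top. norm (norm (D N) / real N) \<le> 1 / real N"
        using ev by eventually_elim (simp add: divide_right_mono)
    qed
    show "\<forall>\<^sub>F N in at_top. real N \<noteq> 0"
      using eventually_gt_at_top[of "0::nat"] by eventually_elim simp
  qed
  show ?thesis using part1 part2 unfolding D_def by blast
qed

end
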